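(* Equivalence $\sim$ of extremal assignments of order $n$ is an equivalence relation, i.e. it is reflexive, symmetric and transitive.
   Context: Let $n\ge 3$ and $[n]=\{1,\dots,n\}$. A stable $n$-labeled tree is a finite tree with exactly $n$ leaves, labeled bijectively by $[n]$, in which every non-leaf (internal) vertex has degree at least 3. $V(G)$ denotes the set of internal vertices of $G$, and $S(n)$ the set of stable $n$-labeled trees (up to label-preserving isomorphism). We write $G\rightsquigarrow G'$ ($G'$ is a contraction of $G$) if $G'$ is obtained from $G$ by collapsing connected sets of internal vertices (together with the edges among them) to single vertices; this induces a surjection $\pi:V(G)\to V(G')$, and we write $\{v_1,\dots,v_k\}\rightsquigarrow v'$ when $\pi^{-1}(v')=\{v_1,\dots,v_k\}$. An extremal assignment of order $n$ is a rule $Z$ assigning to every $G\in S(n)$ a subset $Z(G)\subset V(G)$ such that (a) $Z(G)\neq V(G)$ for all $G$, and (b) whenever $G\rightsquigarrow G'$ and $\{v_1,\dots,v_k\}\rightsquigarrow v'$, we have $v'\in Z(G')$ if and only if $v_1,\dots,v_k\in Z(G)$. For $W\subset V(G)$, a vertex $v\in W$ is isolated (in $W$) if no vertex adjacent to $v$ lies in $W$. Two extremal assignments $Z_1,Z_2$ of order $n$ are equivalent, $Z_1\sim Z_2$, if for every $G\in S(n)$ each vertex of $Z_1(G)\setminus Z_2(G)$ is a vertex of degree 3 that is isolated in $Z_1(G)\setminus Z_2(G)$, and likewise each vertex of $Z_2(G)\setminus Z_1(G)$ is of degree 3 and isolated in $Z_2(G)\setminus Z_1(G)$. *)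

theory Defs
  imports Main
begin

text \<open>Vertices of a labeled tree: leaves carry their label, internal vertices a name.\<close>
datatype node = Lf nat | Inn nat

record ltree =
  ints :: "nat set"                 (* internal vertices V(G) *)
  edges :: "(node \<times> node) set"

definition nodes :: "nat \<Rightarrow> ltree \<Rightarrow> node set" where
  "nodes n G = Lf ` {1..n} \<union> Inn ` ints G"

definition deg :: "ltree \<Rightarrow> node \<Rightarrow> nat" where
  "deg G a = card {b. (a, b) \<in> edges G}"

definition adj :: "ltree \<Rightarrow> node \<Rightarrow> node \<Rightarrow> bool" where
  "adj G a b \<longleftrightarrow> (a, b) \<in> edges G"

definition is_tree :: "nat \<Rightarrow> ltree \<Rightarrow> bool" where
  "is_tree n G \<longleftrightarrow> finite (ints G)
     \<and> edges G \<subseteq> nodes n G \<times> nodes n G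
     \<and> sym (edges G) \<and> irrefl (edges G)
     \<and> (\<forall>a\<in>nodes n G. \<forall>b\<in>nodes n G. (a, b) \<in> (edges G)\<^sup>*)
     \<and> card {{a, b} | a b. (a, b) \<in> edges G} = card (nodes n G) - 1"

definition stable_tree :: "nat \<Rightarrow> ltree \<Rightarrow> bool" where
  "stable_tree n G \<longleftrightarrow> is_tree n G
     \<and> (\<forall>i\<in>{1..n}. deg G (Lf i) = 1)
     \<and> (\<forall>v\<in>ints G. deg G (Inn v) \<ge> 3)"

fun lift :: "(nat \<Rightarrow> nat) \<Rightarrow> node \<Rightarrow> node" where
  "lift \<pi> (Lf i) = Lf i"
| "lift \<pi> (Inn v) = Inn (\<pi> v)"

definition contraction :: "nat \<Rightarrow> ltree \<Rightarrow> ltree \<Rightarrow> (nat \<Rightarrow> nat) \<Rightarrow> bool" where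
  "contraction n G G' \<pi> \<longleftrightarrow> stable_tree n G \<and> stable_tree n G'
     \<and> \<pi> ` ints G = ints G'
     \<and> (\<forall>v'\<in>ints G'. let F = {v\<in>ints G. \<pi> v = v'} in
          \<forall>a\<in>F. \<forall>b\<in>F. (Inn a, Inn b) \<in> (edges G \<inter> (Inn ` F \<times> Inn ` F))\<^sup>*)
     \<and> edges G' = {(lift \<pi> a, lift \<pi> b) | a b. (a, b) \<in> edges G \<and> lift \<pi> a \<noteq> lift \<pi> b}"

definition extremal_assignment :: "nat \<Rightarrow> (ltree \<Rightarrow> nat set) \<Rightarrow> bool" where
  "extremal_assignment n Z \<longleftrightarrow>
     (\<forall>G. stable_tree n G \<longrightarrow> Z G \<subseteq> ints G \<and> Z G \<noteq> ints G)
   \<and> (\<forall>G G' \<pi>. contraction n G G' \<pi> \<longrightarrow>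
        (\<forall>v'\<in>ints G'. v' \<in> Z G' \<longleftrightarrow> (\<forall>v\<in>ints G. \<pi> v = v' \<longrightarrow> v \<in> Z G)))"

definition ExtAssign :: "nat \<Rightarrow> (ltree \<Rightarrow> nat set) set" where
  "ExtAssign n = {Z. extremal_assignment n Z}"

definition deg3_isolated :: "ltree \<Rightarrow> nat set \<Rightarrow> bool" where
  "deg3_isolated G W \<longleftrightarrow> (\<forall>v\<in>W. deg G (Inn v) = 3 \<and> (\<forall>w\<in>W. \<not> adj G (Inn v) (Inn w)))"

definition ext_equiv :: "nat \<Rightarrow> (ltree \<Rightarrow> nat set) \<Rightarrow> (ltree \<Rightarrow> nat set) \<Rightarrow> bool" where
  "ext_equiv n Z1 Z2 \<longleftrightarrow> (\<forall>G. stable_tree n G \<longrightarrow>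
      deg3_isolated G (Z1 G - Z2 G) \<and> deg3_isolated G (Z2 G - Z1 G))"

end

theory Submission
  imports Defs
begin

lemma conn_card:
  assumes fin: "finite {{a, b} | a b. (a, b) \<in> E}"
    and fV: "finite V" and sE: "sym E" and r: "r \<in> V"
    and conn: "\<forall>x\<in>V. (r, x) \<in> E\<^sup>*"
  shows "card V \<le> card {{a, b} | a b. (a, b) \<in> E} + 1"
proof -
  define UE where "UE = {{a, b} | a b. (a, b) \<in> E}"
  define d where "d x = (LEAST k. (r, x) \<in> E ^^ k)" for x
  have dP: "(r, x) \<in> E ^^ d x" if "x \<in> V" for x
  proof -
    from conn that obtain k where "(r,x) \<in> E ^^ k" using rtrancl_power by blast
    thus ?thesis unfolding d_def by (rule LeastI)
  qed
  have ex: "\<exists>y. (x, y) \<in> E \<and> d y < d x" if "x \<in> V" "x \<noteq> r" for x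
  proof -
    have h: "(r, x) \<in> E ^^ d x" using dP that by blast
    have "d x \<noteq> 0" using h that by (metis pair_in_Id_conv relpow.simps(1))
    then obtain m where m: "d x = Suc m" by (cases "d x") auto
    with h obtain y where y1: "(r, y) \<in> E ^^ m" and y2: "(y, x) \<in> E"
      by (metis relpow_Suc_E)
    have "d y \<le> m" unfolding d_def using y1 by (rule Least_le)
    moreover have "(x, y) \<in> E" using y2 sE by (meson symD)
    ultimately show ?thesis using m by auto
  qed
  define p where "p x = (SOME y. (x, y) \<in> E \<and> d y < d x)" for x
  have pP: "(x, p x) \<in> E \<and> d (p x) < d x" if "x \<in> V" "x \<noteq> r" for x
    unfolding p_def using someI_ex[OF ex[OF that]] .
  define f where "f x = {x, p x}" for x
  have "inj_on f (V - {r})"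
  proof (rule inj_onI)
    fix x y assume x: "x \<in> V - {r}" and y: "y \<in> V - {r}" and e: "f x = f y"
    show "x = y"
    proof (rule ccontr)
      assume "x \<noteq> y"
      with e have "x = p y" "y = p x" unfolding f_def by (auto simp: doubleton_eq_iff)
      thus False using pP[of x] pP[of y] x y by auto
    qed
  qed
  moreover have "f ` (V - {r}) \<subseteq> UE" unfolding UE_def f_def using pP by blast
  ultimately have "card (V - {r}) \<le> card UE"
    using card_inj_on_le fin UE_def by blast
  thus ?thesis using r fV UE_def by (simp add: card_Diff_singleton)
qed

lemma no_triangle:
  assumes fV: "finite V" and sub: "E \<subseteq> V \<times> V" and sE: "sym E" and iE: "irrefl E"
    and conn: "\<forall>x\<in>V. \<forall>y\<in>V. (x, y) \<in> E\<^sup>*"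
    and cardE: "card {{a, b} | a b. (a, b) \<in> E} = card V - 1"
    and ab: "(a, b) \<in> E" and bc: "(b, c) \<in> E" and ac: "(a, c) \<in> E"
  shows False
proof -
  have ne: "a \<noteq> b" "b \<noteq> c" "a \<noteq> c" using ab bc ac iE by (auto simp: irrefl_def)
  define E' where "E' = E - {(a, c), (c, a)}"
  have finU: "finite {{a, b} | a b. (a, b) \<in> E}"
  proof -
    have "{{a, b} | a b. (a, b) \<in> E} \<subseteq> Pow V" using sub by auto
    thus ?thesis using fV by (meson finite_Pow_iff finite_subset)
  qed
  have U': "{{x, y} | x y. (x, y) \<in> E'} = {{a, b} | a b. (a, b) \<in> E} - {{a, c}}"
  proof (rule set_eqI, rule iffI)
    fix e assume "e \<in> {{x, y} | x y. (x, y) \<in> E'}"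
    then obtain x y where e: "e = {x, y}" "(x, y) \<in> E" "(x, y) \<noteq> (a, c)" "(x, y) \<noteq> (c, a)"
      unfolding E'_def by blast
    have "{x, y} \<noteq> {a, c}" using e(3,4) by (auto simp: doubleton_eq_iff)
    thus "e \<in> {{a, b} | a b. (a, b) \<in> E} - {{a, c}}" using e by blast
  next
    fix e assume "e \<in> {{a, b} | a b. (a, b) \<in> E} - {{a, c}}"
    then obtain x y where e: "e = {x, y}" "(x, y) \<in> E" "{x, y} \<noteq> {a, c}" by blast
    hence "(x, y) \<in> E'" unfolding E'_def by auto
    thus "e \<in> {{x, y} | x y. (x, y) \<in> E'}" using e by blast
  qed
  have mem: "{a, c} \<in> {{a, b} | a b. (a, b) \<in> E}" using ac by blast
  have finU': "finite {{x, y} | x y. (x, y) \<in> E'}" using U' finU by simp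
  have cU': "card {{x, y} | x y. (x, y) \<in> E'} = card V - 2"
    using U' cardE mem finU by (simp add: card_Diff_singleton)
  have "E \<subseteq> E'\<^sup>*"
  proof
    fix e assume e: "e \<in> E"
    show "e \<in> E'\<^sup>*"
    proof (cases "e \<in> {(a, c), (c, a)}")
      case False thus ?thesis using e unfolding E'_def by auto
    next
      case True
      have 1: "(a, b) \<in> E'" "(b, c) \<in> E'" using ab bc ne unfolding E'_def by auto
      have 2: "(b, a) \<in> E'" "(c, b) \<in> E'" using ab bc ne sE unfolding E'_def
        by (auto dest: symD)
      from 1 2 have "(a, c) \<in> E'\<^sup>*" "(c, a) \<in> E'\<^sup>*"
        by (meson converse_rtrancl_into_rtrancl r_into_rtrancl)+
      thus ?thesis using True by auto
    qed
  qed
  hence "E\<^sup>* \<subseteq> E'\<^sup>*" by (metis rtrancl_subset_rtrancl)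
  have aV: "a \<in> V" using ab sub by auto
  have sE': "sym E'" using sE unfolding E'_def sym_def by auto
  have "card V \<le> card {{x, y} | x y. (x, y) \<in> E'} + 1"
    using conn_card[OF finU' fV sE' aV] conn \<open>E\<^sup>* \<subseteq> E'\<^sup>*\<close> aV by blast
  moreover have "card V \<ge> 3"
  proof -
    have "{a, b, c} \<subseteq> V" using ab bc sub by auto
    hence "card {a, b, c} \<le> card V" using fV card_mono by blast
    thus ?thesis using ne by simp
  qed
  ultimately show False using cU' by linarith
qed

lemma stable_facts:
  assumes "stable_tree n G"
  shows "finite (nodes n G)" "edges G \<subseteq> nodes n G \<times> nodes n G" "sym (edges G)"
    "irrefl (edges G)" "\<forall>a\<in>nodes n G. \<forall>b\<in>nodes n G. (a, b) \<in> (edges G)\<^sup>*"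
    "card {{a, b} | a b. (a, b) \<in> edges G} = card (nodes n G) - 1"
    "finite (ints G)"
  using assms unfolding stable_tree_def is_tree_def nodes_def by auto

lemma tree_no_triangle:
  assumes "stable_tree n G" "(x, y) \<in> edges G" "(y, z) \<in> edges G" "(x, z) \<in> edges G"
  shows False
  using no_triangle[OF stable_facts(1-6)[OF assms(1)] assms(2-4)] .

lemma contract_edge:
  assumes st: "stable_tree n G" and a: "a \<in> ints G" and b: "b \<in> ints G"
    and ab: "(Inn a, Inn b) \<in> edges G"
    and \<pi>: "\<pi> = (\<lambda>x. if x = b then a else x)"
    and G': "G' = \<lparr>ints = ints G - {b},
       edges = {(lift \<pi> x, lift \<pi> y) | x y. (x, y) \<in> edges G \<and> lift \<pi> x \<noteq> lift \<pi> y}\<rparr>"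
  shows "contraction n G G' \<pi>" "deg G' (Inn a) = deg G (Inn a) + deg G (Inn b) - 2"
    "a \<in> ints G'" "\<And>v. v \<in> ints G \<Longrightarrow> \<pi> v = a \<longleftrightarrow> v = a \<or> v = b"
proof -
  define E where "E = edges G"
  define A where "A = Inn a"
  define B where "B = Inn b"
  define L where "L = lift \<pi>"
  note sf = stable_facts[OF st, folded E_def]
  have abE: "(A, B) \<in> E" using ab A_def B_def E_def by simp
  have baE: "(B, A) \<in> E" using abE sf(3) by (meson symD)
  have neab: "a \<noteq> b" using abE sf(4) A_def B_def by (auto simp: irrefl_def)
  have Leq: "L x = (if x = B then A else x)" for x
    unfolding L_def A_def B_def \<pi> by (cases x) auto
  have nofree: "\<not> ((x, A) \<in> E \<and> (x, B) \<in> E)" for x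
  proof
    assume h: "(x, A) \<in> E \<and> (x, B) \<in> E"
    thus False using tree_no_triangle[OF st, of x A B] abE E_def by auto
  qed
  have irr: "(x, x) \<notin> E" for x using sf(4) by (auto simp: irrefl_def)
  have symE: "(x, y) \<in> E \<Longrightarrow> (y, x) \<in> E" for x y using sf(3) by (meson symD)
  have E'eq: "edges G' = {(L x, L y) | x y. (x, y) \<in> E \<and> L x \<noteq> L y}"
    using G' L_def E_def by simp
  have iG': "ints G' = ints G - {b}" using G' by simp
  have E'mem: "(p, q) \<in> E \<Longrightarrow> L p \<noteq> L q \<Longrightarrow> (L p, L q) \<in> edges G'" for p q
    unfolding E'eq by (rule CollectI, intro exI conjI) (rule refl, assumption+)
  have nodes': "nodes n G' = nodes n G - {B}"
    unfolding nodes_def iG' B_def by auto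
  have BinV: "B \<in> nodes n G" "A \<in> nodes n G" using a b A_def B_def nodes_def by auto
  have Limg: "L ` nodes n G = nodes n G'"
    using BinV neab A_def B_def unfolding nodes' by (auto simp: Leq)
  have finN: "finite {y. (x, y) \<in> E}" for x
  proof -
    have "{y. (x, y) \<in> E} \<subseteq> nodes n G" using sf(2) by auto
    thus ?thesis using sf(1) by (rule finite_subset)
  qed
  have N'other: "{z. (x, z) \<in> edges G'} = L ` {y. (x, y) \<in> E}" if "x \<noteq> A" "x \<noteq> B" for x
  proof (rule set_eqI, rule iffI)
    fix z assume "z \<in> {z. (x, z) \<in> edges G'}"
    then obtain p q where pq: "(p, q) \<in> E" "x = L p" "z = L q" unfolding E'eq by blast
    have "p = x" using pq(2) that by (auto simp: Leq split: if_splits)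
    thus "z \<in> L ` {y. (x, y) \<in> E}" using pq by blast
  next
    fix z assume "z \<in> L ` {y. (x, y) \<in> E}"
    then obtain q where q: "(x, q) \<in> E" "z = L q" by blast
    have "L x = x" using that by (simp add: Leq)
    moreover have "L q \<noteq> x" using that q irr by (auto simp: Leq split: if_splits)
    ultimately show "z \<in> {z. (x, z) \<in> edges G'}" unfolding E'eq using q by force
  qed
  have injN: "inj_on L {y. (x, y) \<in> E}" for x
  proof (rule inj_onI)
    fix p q assume "p \<in> {y. (x, y) \<in> E}" "q \<in> {y. (x, y) \<in> E}" "L p = L q"
    thus "p = q" using nofree[of x] by (auto simp: Leq split: if_splits)
  qed
  have degother: "deg G' x = deg G x" if "x \<noteq> A" "x \<noteq> B" for x
    unfolding deg_def N'other[OF that] using card_image[OF injN] E_def by simp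
  have N'A: "{z. (A, z) \<in> edges G'} = ({y. (A, y) \<in> E} - {B}) \<union> ({y. (B, y) \<in> E} - {A})"
  proof (rule set_eqI, rule iffI)
    fix z assume "z \<in> {z. (A, z) \<in> edges G'}"
    then obtain p q where pq: "(p, q) \<in> E" "A = L p" "z = L q" "L p \<noteq> L q" unfolding E'eq by blast
    have "p = A \<or> p = B" using pq(2) by (auto simp: Leq split: if_splits)
    moreover have "q \<noteq> B" "z = q" "q \<noteq> A" using pq by (auto simp: Leq split: if_splits)
    ultimately show "z \<in> ({y. (A, y) \<in> E} - {B}) \<union> ({y. (B, y) \<in> E} - {A})"
      using pq(1) by auto
  next
    fix z assume z: "z \<in> ({y. (A, y) \<in> E} - {B}) \<union> ({y. (B, y) \<in> E} - {A})"
    hence "z \<noteq> A" "z \<noteq> B" using irr by auto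
    hence Lz: "L z = z" by (simp add: Leq)
    from z obtain p where p: "p = A \<or> p = B" "(p, z) \<in> E" by auto
    have Lp: "L p = A" using p(1) by (auto simp: Leq)
    show "z \<in> {z. (A, z) \<in> edges G'}" unfolding E'eq
      using p(2) Lp Lz \<open>z \<noteq> A\<close> by force
  qed
  have degA: "deg G' A = deg G A + deg G B - 2"
  proof -
    have disj: "({y. (A, y) \<in> E} - {B}) \<inter> ({y. (B, y) \<in> E} - {A}) = {}"
      using nofree symE by blast
    have "deg G' A = card ({y. (A, y) \<in> E} - {B}) + card ({y. (B, y) \<in> E} - {A})"
      unfolding deg_def N'A using card_Un_disjoint[OF _ _ disj] finN by auto
    also have "\<dots> = (deg G A - 1) + (deg G B - 1)"
      unfolding deg_def E_def[symmetric] using abE baE finN by (simp add: card_Diff_singleton)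
    also have "\<dots> = deg G A + deg G B - 2"
    proof -
      have "deg G A \<ge> 1" "deg G B \<ge> 1" unfolding deg_def E_def[symmetric]
        using abE baE finN by (auto simp: Suc_le_eq card_gt_0_iff)
      thus ?thesis by simp
    qed
    finally show ?thesis .
  qed
  show "deg G' (Inn a) = deg G (Inn a) + deg G (Inn b) - 2" using degA A_def B_def by simp
  show "a \<in> ints G'" using iG' a neab by simp
  show "\<And>v. v \<in> ints G \<Longrightarrow> \<pi> v = a \<longleftrightarrow> v = a \<or> v = b" using \<pi> by auto
  have path: "(x, y) \<in> E\<^sup>* \<Longrightarrow> (L x, L y) \<in> (edges G')\<^sup>*" for x y
  proof (induction rule: rtrancl_induct)
    case base thus ?case by simp
  next
    case (step y z)
    show ?case
    proof (cases "L y = L z")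
      case True thus ?thesis using step by simp
    next
      case False
      hence "(L y, L z) \<in> edges G'" unfolding E'eq using step by blast
      thus ?thesis using step by (meson rtrancl.rtrancl_into_rtrancl)
    qed
  qed
  have conn': "\<forall>x\<in>nodes n G'. \<forall>y\<in>nodes n G'. (x, y) \<in> (edges G')\<^sup>*"
  proof (intro ballI)
    fix x y assume "x \<in> nodes n G'" "y \<in> nodes n G'"
    hence xy: "x \<in> nodes n G" "y \<in> nodes n G" "x \<noteq> B" "y \<noteq> B" using nodes' by auto
    hence "(L x, L y) \<in> (edges G')\<^sup>*" using sf(5) path by blast
    thus "(x, y) \<in> (edges G')\<^sup>*" using xy by (simp add: Leq)
  qed
  have sub': "edges G' \<subseteq> nodes n G' \<times> nodes n G'"
  proof
    fix e assume "e \<in> edges G'"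
    then obtain p q where pq: "(p, q) \<in> E" "e = (L p, L q)" unfolding E'eq by blast
    have "p \<in> nodes n G" "q \<in> nodes n G" using pq(1) sf(2) by auto
    hence "L p \<in> nodes n G'" "L q \<in> nodes n G'" using Limg by (metis imageI)+
    thus "e \<in> nodes n G' \<times> nodes n G'" using pq(2) by simp
  qed
  have sym': "sym (edges G')"
  proof (rule symI)
    fix x y assume "(x, y) \<in> edges G'"
    then obtain p q where pq: "(p, q) \<in> E" "x = L p" "y = L q" "L p \<noteq> L q" unfolding E'eq by blast
    have "(q, p) \<in> E" using symE pq(1) .
    thus "(y, x) \<in> edges G'" using pq E'mem by metis
  qed
  have irr': "irrefl (edges G')"
    unfolding irrefl_def E'eq by auto
  define UE where "UE = {{x, y} | x y. (x, y) \<in> E}"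
  have edge_mem: "{x, y} \<in> UE \<Longrightarrow> (x, y) \<in> E" for x y
  proof -
    assume "{x, y} \<in> UE"
    then obtain p q where pq: "{x, y} = {p, q}" "(p, q) \<in> E" unfolding UE_def by blast
    from pq(1) have "(x = p \<and> y = q) \<or> (x = q \<and> y = p)" by (simp add: doubleton_eq_iff)
    thus "(x, y) \<in> E" using pq(2) symE by blast
  qed
  have UE': "{{x, y} | x y. (x, y) \<in> edges G'} = (\<lambda>e. L ` e) ` (UE - {{A, B}})"
  proof (rule set_eqI, rule iffI)
    fix e assume "e \<in> {{x, y} | x y. (x, y) \<in> edges G'}"
    then obtain x y where xy: "e = {x, y}" "(x, y) \<in> edges G'" by blast
    from xy(2) obtain p q where pq0: "(p, q) \<in> E" "L p \<noteq> L q" "x = L p" "y = L q"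
      unfolding E'eq by blast
    have pq: "(p, q) \<in> E" "L p \<noteq> L q" "e = {L p, L q}" using pq0 xy by auto
    have "{p, q} \<noteq> {A, B}" using pq(2) by (auto simp: doubleton_eq_iff Leq)
    moreover have "{p, q} \<in> UE" using pq(1) unfolding UE_def by blast
    moreover have "e = L ` {p, q}" using pq(3) by simp
    ultimately show "e \<in> (\<lambda>e. L ` e) ` (UE - {{A, B}})" by blast
  next
    fix e assume "e \<in> (\<lambda>e. L ` e) ` (UE - {{A, B}})"
    then obtain p q where pq: "{p, q} \<in> UE" "{p, q} \<noteq> {A, B}" "e = {L p, L q}"
      unfolding UE_def by blast
    have E1: "(p, q) \<in> E" using edge_mem pq(1) .
    have "p \<noteq> q" using E1 irr by auto
    hence "L p \<noteq> L q" using pq(2) by (auto simp: Leq doubleton_eq_iff split: if_splits)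
    hence "(L p, L q) \<in> edges G'" using E1 E'mem by blast
    thus "e \<in> {{x, y} | x y. (x, y) \<in> edges G'}" using pq(3) by blast
  qed
  have shape: "e \<in> UE - {{A, B}} \<Longrightarrow> (B \<notin> e \<and> L ` e = e) \<or>
      (\<exists>z. e = {B, z} \<and> z \<noteq> A \<and> z \<noteq> B \<and> (z, B) \<in> E \<and> L ` e = {A, z})" for e
  proof -
    assume e: "e \<in> UE - {{A, B}}"
    then obtain p q where pq: "e = {p, q}" "(p, q) \<in> E" unfolding UE_def by blast
    show ?thesis
    proof (cases "B \<in> e")
      case False
      hence "L ` e = e" using pq by (auto simp: Leq)
      thus ?thesis using False by simp
    next
      case True
      then obtain z where z: "e = {B, z}" using pq by auto
      have "(B, z) \<in> E" using edge_mem e z by auto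
      hence "z \<noteq> B" using irr by auto
      moreover have "z \<noteq> A" using e z by auto
      ultimately show ?thesis using z \<open>(B, z) \<in> E\<close> symE by (auto simp: Leq)
    qed
  qed
  have injU: "inj_on (\<lambda>e. L ` e) (UE - {{A, B}})"
  proof (rule inj_onI)
    fix e1 e2 assume e1: "e1 \<in> UE - {{A, B}}" and e2: "e2 \<in> UE - {{A, B}}"
      and eq: "L ` e1 = L ` e2"
    have noAz: "(z, B) \<in> E \<Longrightarrow> {A, z} \<notin> UE" for z
      using nofree[of z] edge_mem symE by blast
    have AU: "{A, z} \<in> UE \<Longrightarrow> (z, B) \<notin> E" for z using noAz by blast
    show "e1 = e2"
    proof (cases "B \<in> e1")
      case False
      hence L1: "L ` e1 = e1" using shape[OF e1] by blast
      show ?thesis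
      proof (cases "B \<in> e2")
        case False
        hence "L ` e2 = e2" using shape[OF e2] by blast
        thus ?thesis using L1 eq by simp
      next
        case True
        then obtain z where z: "e2 = {B, z}" "(z, B) \<in> E" "L ` e2 = {A, z}"
          using shape[OF e2] by blast
        have "e1 = {A, z}" using L1 eq z by simp
        thus ?thesis using e1 AU z(2) by blast
      qed
    next
      case True
      then obtain z where z: "e1 = {B, z}" "(z, B) \<in> E" "L ` e1 = {A, z}" "z \<noteq> A"
        using shape[OF e1] by blast
      show ?thesis
      proof (cases "B \<in> e2")
        case False
        hence "L ` e2 = e2" using shape[OF e2] by blast
        hence "e2 = {A, z}" using eq z by simp
        thus ?thesis using e2 AU z(2) by blast
      next
        case True
        then obtain w where w: "e2 = {B, w}" "L ` e2 = {A, w}" "w \<noteq> A"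
          using shape[OF e2] by blast
        have "{A, z} = {A, w}" using z w eq by simp
        hence "z = w" using z(4) w(3) by (auto simp: doubleton_eq_iff)
        thus ?thesis using z w by simp
      qed
    qed
  qed
  have finUE: "finite UE"
  proof -
    have "UE \<subseteq> Pow (nodes n G)" unfolding UE_def using sf(2) by auto
    thus ?thesis using sf(1) by (meson finite_Pow_iff finite_subset)
  qed
  have ABU: "{A, B} \<in> UE" unfolding UE_def using abE by blast
  have card': "card {{a, b} | a b. (a, b) \<in> edges G'} = card (nodes n G') - 1"
    unfolding UE' card_image[OF injU] using finUE ABU sf(6) sf(1) BinV
    by (simp add: card_Diff_singleton UE_def nodes')
  have tree': "is_tree n G'"
    unfolding is_tree_def using conn' sub' sym' irr' card' iG' sf(7) by simp
  have leaves': "\<forall>i\<in>{1..n}. deg G' (Lf i) = 1"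
    using degother st A_def B_def unfolding stable_tree_def by simp
  have ints': "\<forall>v\<in>ints G'. deg G' (Inn v) \<ge> 3"
  proof
    fix v assume v: "v \<in> ints G'"
    show "deg G' (Inn v) \<ge> 3"
    proof (cases "v = a")
      case True
      have "deg G A \<ge> 3" "deg G B \<ge> 3" using st a b A_def B_def unfolding stable_tree_def by auto
      thus ?thesis using degA True A_def by simp
    next
      case False
      hence "deg G' (Inn v) = deg G (Inn v)" using degother v iG' A_def B_def by simp
      thus ?thesis using st v iG' unfolding stable_tree_def by auto
    qed
  qed
  have st': "stable_tree n G'" unfolding stable_tree_def using tree' leaves' ints' by simp
  show "contraction n G G' \<pi>"
    unfolding contraction_def
  proof (intro conjI)
    show "stable_tree n G" by (rule st)
    show "stable_tree n G'" by (rule st')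
    show "\<pi> ` ints G = ints G'" using iG' a b neab \<pi> by auto
    show "edges G' = {(lift \<pi> a, lift \<pi> b) | a b. (a, b) \<in> edges G \<and> lift \<pi> a \<noteq> lift \<pi> b}"
      using G' by simp
    show "\<forall>v'\<in>ints G'. let F = {v\<in>ints G. \<pi> v = v'} in
          \<forall>x\<in>F. \<forall>y\<in>F. (Inn x, Inn y) \<in> (edges G \<inter> (Inn ` F \<times> Inn ` F))\<^sup>*"
      unfolding Let_def
    proof (intro ballI)
      fix v' x y assume v': "v' \<in> ints G'" and x: "x \<in> {v \<in> ints G. \<pi> v = v'}"
        and y: "y \<in> {v \<in> ints G. \<pi> v = v'}"
      show "(Inn x, Inn y) \<in> (edges G \<inter> (Inn ` {v \<in> ints G. \<pi> v = v'} \<times> Inn ` {v \<in> ints G. \<pi> v = v'}))\<^sup>*"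
      proof (cases "x = y")
        case True thus ?thesis by simp
      next
        case False
        hence "{x, y} = {a, b}" using x y \<pi> by (auto split: if_splits)
        hence "(Inn x, Inn y) \<in> edges G" using abE baE A_def B_def E_def by (auto simp: doubleton_eq_iff)
        thus ?thesis using x y by (intro r_into_rtrancl) auto
      qed
    qed
  qed
qed

lemma key:
  assumes Z1: "extremal_assignment n Z1" and Z2: "extremal_assignment n Z2"
    and eq: "ext_equiv n Z1 Z2" and st: "stable_tree n G"
    and a: "a \<in> ints G" and b: "b \<in> ints G" and ab: "(Inn a, Inn b) \<in> edges G"
    and in1: "a \<in> Z1 G" "b \<in> Z1 G" and n2: "a \<notin> Z2 G"
  shows False
proof -
  define \<pi> where "\<pi> = (\<lambda>x. if x = b then a else (x::nat))"
  define G' where "G' = \<lparr>ints = ints G - {b},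
       edges = {(lift \<pi> x, lift \<pi> y) | x y. (x, y) \<in> edges G \<and> lift \<pi> x \<noteq> lift \<pi> y}\<rparr>"
  note c = contract_edge[OF st a b ab \<pi>_def G'_def]
  have pre: "(\<forall>v\<in>ints G. \<pi> v = a \<longrightarrow> v \<in> Z G) \<longleftrightarrow> a \<in> Z G \<and> b \<in> Z G" for Z
  proof
    assume "\<forall>v\<in>ints G. \<pi> v = a \<longrightarrow> v \<in> Z G"
    moreover have "\<pi> a = a" "\<pi> b = a" unfolding \<pi>_def by simp_all
    ultimately show "a \<in> Z G \<and> b \<in> Z G" using a b by blast
  next
    assume "a \<in> Z G \<and> b \<in> Z G"
    thus "\<forall>v\<in>ints G. \<pi> v = a \<longrightarrow> v \<in> Z G" using c(4) by metis
  qed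
  have ext: "a \<in> Z G' \<longleftrightarrow> (\<forall>v\<in>ints G. \<pi> v = a \<longrightarrow> v \<in> Z G)"
    if Z: "extremal_assignment n Z" for Z
  proof -
    have "\<forall>G G' \<pi>. contraction n G G' \<pi> \<longrightarrow>
        (\<forall>v'\<in>ints G'. v' \<in> Z G' \<longleftrightarrow> (\<forall>v\<in>ints G. \<pi> v = v' \<longrightarrow> v \<in> Z G))"
      using Z unfolding extremal_assignment_def by (rule conjunct2)
    hence "\<forall>v'\<in>ints G'. v' \<in> Z G' \<longleftrightarrow> (\<forall>v\<in>ints G. \<pi> v = v' \<longrightarrow> v \<in> Z G)"
      using c(1) by blast
    thus ?thesis using c(3) by blast
  qed
  have in1': "a \<in> Z1 G' - Z2 G'" using ext[OF Z1] ext[OF Z2] pre[of Z1] pre[of Z2] in1 n2 by blast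
  have st': "stable_tree n G'" using c(1) unfolding contraction_def by (rule conjunct1[OF conjunct2])
  have "deg3_isolated G' (Z1 G' - Z2 G')" using eq st' unfolding ext_equiv_def by blast
  hence "deg G' (Inn a) = 3" using in1' unfolding deg3_isolated_def by blast
  moreover have "deg G (Inn a) \<ge> 3" "deg G (Inn b) \<ge> 3" using st a b unfolding stable_tree_def by auto
  ultimately show False using c(2) by simp
qed

lemma ext_equiv_sym: "ext_equiv n Z1 Z2 \<Longrightarrow> ext_equiv n Z2 Z1"
  unfolding ext_equiv_def by blast

lemma trans_half:
  assumes Z1: "extremal_assignment n Z1" and Z2: "extremal_assignment n Z2"
    and Z3: "extremal_assignment n Z3"
    and e12: "ext_equiv n Z1 Z2" and e23: "ext_equiv n Z2 Z3" and st: "stable_tree n G"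
  shows "deg3_isolated G (Z1 G - Z3 G)"
  unfolding deg3_isolated_def
proof (intro ballI conjI)
  have d12: "deg3_isolated G (Z1 G - Z2 G)" using e12 st unfolding ext_equiv_def by blast
  have d23: "deg3_isolated G (Z2 G - Z3 G)" using e23 st unfolding ext_equiv_def by blast
  have sub1: "Z1 G \<subseteq> ints G" using Z1 st unfolding extremal_assignment_def by blast
  fix v assume v: "v \<in> Z1 G - Z3 G"
  show "deg G (Inn v) = 3"
    using v d12 d23 unfolding deg3_isolated_def by (cases "v \<in> Z2 G") auto
  fix w assume w: "w \<in> Z1 G - Z3 G"
  show "\<not> adj G (Inn v) (Inn w)"
  proof
    assume ad: "adj G (Inn v) (Inn w)"
    hence e1: "(Inn v, Inn w) \<in> edges G" unfolding adj_def .
    have e2: "(Inn w, Inn v) \<in> edges G" using e1 st unfolding stable_tree_def is_tree_def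
      by (meson symD)
    have vi: "v \<in> ints G" "w \<in> ints G" using v w sub1 by auto
    show False
    proof (cases "v \<in> Z2 G"; cases "w \<in> Z2 G")
      assume "v \<in> Z2 G" "w \<in> Z2 G"
      thus False using v w ad d23 unfolding deg3_isolated_def by blast
    next
      assume "v \<notin> Z2 G" "w \<notin> Z2 G"
      thus False using v w ad d12 unfolding deg3_isolated_def by blast
    next
      assume "v \<in> Z2 G" "w \<notin> Z2 G"
      thus False using key[OF Z1 Z2 e12 st vi(2) vi(1) e2] v w by blast
    next
      assume "v \<notin> Z2 G" "w \<in> Z2 G"
      thus False using key[OF Z1 Z2 e12 st vi(1) vi(2) e1] v w by blast
    qed
  qed
qed

theorem mainTheorem1:
  assumes "n \<ge> 3"
  shows "equiv (ExtAssign n)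
           {(Z1, Z2). Z1 \<in> ExtAssign n \<and> Z2 \<in> ExtAssign n \<and> ext_equiv n Z1 Z2}"
proof (rule equivI)
  show "{(Z1, Z2). Z1 \<in> ExtAssign n \<and> Z2 \<in> ExtAssign n \<and> ext_equiv n Z1 Z2} \<subseteq> ExtAssign n \<times> ExtAssign n"
    by auto
  show "refl_on (ExtAssign n) {(Z1, Z2). Z1 \<in> ExtAssign n \<and> Z2 \<in> ExtAssign n \<and> ext_equiv n Z1 Z2}"
    unfolding refl_on_def ext_equiv_def deg3_isolated_def by auto
  show "sym {(Z1, Z2). Z1 \<in> ExtAssign n \<and> Z2 \<in> ExtAssign n \<and> ext_equiv n Z1 Z2}"
    unfolding sym_def using ext_equiv_sym by blast
  show "trans {(Z1, Z2). Z1 \<in> ExtAssign n \<and> Z2 \<in> ExtAssign n \<and> ext_equiv n Z1 Z2}"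
  proof (rule transI)
    fix x y z
    assume "(x, y) \<in> {(Z1, Z2). Z1 \<in> ExtAssign n \<and> Z2 \<in> ExtAssign n \<and> ext_equiv n Z1 Z2}"
      and "(y, z) \<in> {(Z1, Z2). Z1 \<in> ExtAssign n \<and> Z2 \<in> ExtAssign n \<and> ext_equiv n Z1 Z2}"
    hence h: "extremal_assignment n x" "extremal_assignment n y" "extremal_assignment n z"
      "ext_equiv n x y" "ext_equiv n y z" unfolding ExtAssign_def by auto
    have "ext_equiv n x z" unfolding ext_equiv_def
      using trans_half[OF h(1-5)] trans_half[OF h(3,2,1) ext_equiv_sym[OF h(5)] ext_equiv_sym[OF h(4)]]
      by blast
    thus "(x, z) \<in> {(Z1, Z2). Z1 \<in> ExtAssign n \<and> Z2 \<in> ExtAssign n \<and> ext_equiv n Z1 Z2}"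
      using h unfolding ExtAssign_def by auto
  qed
qed

end
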